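(* For every cake $C$ and every family $S$ of usable pieces, $$\mathrm{PropEF}(C,2,S)\ \ge\ \mathrm{Prop}(C,2,S)\cdot\inf_{s\in S}\mathrm{PropEF}(s,2,S).$$
   Context: A cake is a Borel subset of $\mathbb{R}^d$; $S$ is a family of Borel subsets of $\mathbb{R}^d$. For a cake $D$ (here $D=C$ or $D=s\in S$), a value measure on $D$ is $V(X)=\int_X v$ with $v$ non-negative, bounded, integrable on $D$, $V(D)<\infty$; $V^S(X):=\sup\{V(s'):s'\in S,s'\subseteq X\}$. For $n$ agents with value measures $V_1,\dots,V_n$ on $D$, an $S$-allocation of $D$ is $(X_1,\dots,X_n)$ with $X_i\in S$ pairwise disjoint and $\bigcup_i X_i\subseteq D$; it is envy-free if $V_i^S(X_i)\ge V_i^S(X_j)$ for all $i,j$. $\mathrm{PropEF}(D,n,S):=\inf_{V_1,\dots,V_n}\sup_X\min_i V_i(X_i)/V_i(D)$, infimum over all $n$-tuples of value measures on $D$ and supremum over envy-free $S$-allocations of $D$; $\mathrm{Prop}(D,n,S)$ is defined identically with the supremum over all $S$-allocations of $D$. *)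

theory Defs
  imports "HOL-Analysis.Analysis"
begin

text \<open>A value measure on a cake D is given by its density v: non-negative and bounded on D,
(Lebesgue) integrable on D, with V(D) > 0 (so that the ratio V(X)/V(D) is meaningful).\<close>

definition val :: "('a::euclidean_space \<Rightarrow> real) \<Rightarrow> 'a set \<Rightarrow> real" where
  "val v X = (LINT x:X|lebesgue. v x)"

definition value_density :: "'a::euclidean_space set \<Rightarrow> ('a \<Rightarrow> real) \<Rightarrow> bool" where
  "value_density D v \<longleftrightarrow> (\<forall>x\<in>D. 0 \<le> v x) \<and> (\<exists>B. \<forall>x\<in>D. v x \<le> B)
      \<and> set_integrable lebesgue D v \<and> 0 < val v D"

definition valS :: "'a::euclidean_space set set \<Rightarrow> ('a \<Rightarrow> real) \<Rightarrow> 'a set \<Rightarrow> real" where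
  "valS S v X = Sup {val v s' | s'. s' \<in> S \<and> s' \<subseteq> X}"

definition S_allocation :: "'a set \<Rightarrow> nat \<Rightarrow> 'a set set \<Rightarrow> (nat \<Rightarrow> 'a set) \<Rightarrow> bool" where
  "S_allocation D n S X \<longleftrightarrow> (\<forall>i<n. X i \<in> S) \<and> (\<forall>i<n. \<forall>j<n. i \<noteq> j \<longrightarrow> X i \<inter> X j = {})
      \<and> (\<Union>i<n. X i) \<subseteq> D"

definition envy_free :: "'a::euclidean_space set set \<Rightarrow> nat \<Rightarrow> (nat \<Rightarrow> 'a \<Rightarrow> real) \<Rightarrow> (nat \<Rightarrow> 'a set) \<Rightarrow> bool" where
  "envy_free S n v X \<longleftrightarrow> (\<forall>i<n. \<forall>j<n. valS S (v i) (X i) \<ge> valS S (v i) (X j))"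

definition min_share :: "nat \<Rightarrow> 'a::euclidean_space set \<Rightarrow> (nat \<Rightarrow> 'a \<Rightarrow> real) \<Rightarrow> (nat \<Rightarrow> 'a set) \<Rightarrow> real" where
  "min_share n D v X = Min ((\<lambda>i. val (v i) (X i) / val (v i) D) ` {..<n})"

text \<open>Values taken in ennreal: sup of the empty set is 0, inf of the empty set is \<infinity>.\<close>

definition PropEF :: "'a::euclidean_space set \<Rightarrow> nat \<Rightarrow> 'a set set \<Rightarrow> ennreal" where
  "PropEF D n S = (INF v \<in> {v. \<forall>i<n. value_density D (v i)}.
      SUP X \<in> {X. S_allocation D n S X \<and> envy_free S n v X}. ennreal (min_share n D v X))"

definition Prop :: "'a::euclidean_space set \<Rightarrow> nat \<Rightarrow> 'a set set \<Rightarrow> ennreal" where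
  "Prop D n S = (INF v \<in> {v. \<forall>i<n. value_density D (v i)}.
      SUP X \<in> {X. S_allocation D n S X}. ennreal (min_share n D v X))"

end

theory Submission
  imports Defs
begin

lemma borel_leb: "B \<in> sets borel \<Longrightarrow> B \<in> sets lebesgue"
  by (metis sets_completionI_sets sets_lborel)

lemma val_mono:
  fixes v :: "'a::euclidean_space \<Rightarrow> real"
  assumes "\<forall>x\<in>D. 0 \<le> v x" "set_integrable lebesgue D v" "A \<subseteq> B" "B \<subseteq> D"
    "A \<in> sets lebesgue" "B \<in> sets lebesgue"
  shows "val v A \<le> val v B"
proof -
  have iA: "set_integrable lebesgue A v" using assms set_integrable_subset by blast
  have iB: "set_integrable lebesgue B v" using assms set_integrable_subset by blast
  have "(LINT x|lebesgue. indicator A x *\<^sub>R v x) \<le> (LINT x|lebesgue. indicator B x *\<^sub>R v x)"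
    apply (rule integral_mono)
    using iA iB assms unfolding set_integrable_def
    by (auto split: split_indicator)
  then show ?thesis unfolding val_def set_lebesgue_integral_def .
qed

lemma val_nonneg:
  fixes v :: "'a::euclidean_space \<Rightarrow> real"
  assumes "\<forall>x\<in>D. 0 \<le> v x" "A \<subseteq> D"
  shows "0 \<le> val v A"
  unfolding val_def set_lebesgue_integral_def
  using assms by (intro integral_nonneg_AE) (auto split: split_indicator)

lemma vd_restrict:
  assumes "value_density C v" "s \<subseteq> C" "s \<in> sets lebesgue" "0 < val v s"
  shows "value_density s v"
  using assms set_integrable_subset unfolding value_density_def by blast

lemma valS_eq:
  assumes "value_density C v" "X \<in> S" "X \<subseteq> C" "S \<subseteq> sets borel"
  shows "valS S v X = val v X"
  unfolding valS_def
proof (rule cSup_eq_maximum)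
  show "val v X \<in> {val v s' |s'. s' \<in> S \<and> s' \<subseteq> X}" using assms by auto
  fix x assume "x \<in> {val v s' |s'. s' \<in> S \<and> s' \<subseteq> X}"
  then obtain s' where "x = val v s'" "s' \<in> S" "s' \<subseteq> X" by auto
  then show "x \<le> val v X"
  proof -
    have "s' \<in> sets lebesgue" "X \<in> sets lebesgue" using assms \<open>s' \<in> S\<close> borel_leb by auto
    moreover have "\<forall>x\<in>C. 0 \<le> v x" "set_integrable lebesgue C v"
      using assms(1) unfolding value_density_def by blast+
    ultimately show ?thesis using val_mono[of C v s' X] assms \<open>s' \<subseteq> X\<close> \<open>x = val v s'\<close> by blast
  qed
qed

lemma two: "{..<2::nat} = {0,1}" by auto

lemma min_share2: "min_share 2 D v X = min (val (v 0) (X 0) / val (v 0) D) (val (v 1) (X 1) / val (v 1) D)"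
  unfolding min_share_def two by simp

lemma ef2: "envy_free S 2 v X \<longleftrightarrow> valS S (v 0) (X 0) \<ge> valS S (v 0) (X 1) \<and> valS S (v 1) (X 1) \<ge> valS S (v 1) (X 0)"
  unfolding envy_free_def by (auto simp: less_2_cases_iff)

lemma alloc2: "S_allocation D 2 S X \<longleftrightarrow> X 0 \<in> S \<and> X 1 \<in> S \<and> X 0 \<inter> X 1 = {} \<and> X 0 \<union> X 1 \<subseteq> D"
  unfolding S_allocation_def two by (auto simp: less_2_cases_iff)



lemma PropEF_le1:
  assumes vd: "value_density s w" and S: "S \<subseteq> sets borel" and sm: "s \<in> sets lebesgue"
  shows "PropEF s 2 S \<le> 1"
proof -
  let ?v = "\<lambda>_::nat. w"
  have "PropEF s 2 S \<le> (SUP X \<in> {X. S_allocation s 2 S X \<and> envy_free S 2 ?v X}. ennreal (min_share 2 s ?v X))"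
    unfolding PropEF_def by (rule INF_lower) (use vd in auto)
  also have "\<dots> \<le> 1"
  proof (rule SUP_least)
    fix X assume "X \<in> {X. S_allocation s 2 S X \<and> envy_free S 2 ?v X}"
    then have X: "X 0 \<in> S" "X 0 \<subseteq> s" unfolding alloc2 by auto
    have pos: "0 < val w s" and nn: "\<forall>x\<in>s. 0 \<le> w x" and int: "set_integrable lebesgue s w"
      using vd unfolding value_density_def by blast+
    have "val w (X 0) \<le> val w s"
      apply (rule val_mono[OF nn int X(2) order_refl])
      using X S borel_leb sm by auto
    then have "val w (X 0) / val w s \<le> 1" using pos by simp
    then have "min_share 2 s ?v X \<le> 1" unfolding min_share2 by simp
    then show "ennreal (min_share 2 s ?v X) \<le> 1" by (simp add: ennreal_le_1)
  qed
  finally show ?thesis .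
qed


lemma sub_case:
  fixes C :: "'a::euclidean_space set"
  assumes S: "S \<subseteq> sets borel" and vC: "\<forall>i<2. value_density C (v i)"
    and sS: "s \<in> S" and sC: "s \<subseteq> C" and vs: "\<forall>i<2. value_density s (v i)"
    and m0: "0 \<le> m" and mi: "\<forall>i<2. m \<le> val (v i) s / val (v i) C"
  shows "ennreal m * PropEF s 2 S \<le>
    (SUP X \<in> {X. S_allocation C 2 S X \<and> envy_free S 2 v X}. ennreal (min_share 2 C v X))"
proof -
  let ?Es = "{X. S_allocation s 2 S X \<and> envy_free S 2 v X}"
  have "PropEF s 2 S \<le> (SUP X \<in> ?Es. ennreal (min_share 2 s v X))"
    unfolding PropEF_def by (rule INF_lower) (use vs in auto)
  then have "ennreal m * PropEF s 2 S \<le> ennreal m * (SUP X \<in> ?Es. ennreal (min_share 2 s v X))"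
    by (rule mult_left_mono) simp
  also have "\<dots> = (SUP X \<in> ?Es. ennreal m * ennreal (min_share 2 s v X))"
    by (rule SUP_mult_left_ennreal)
  also have "\<dots> \<le> (SUP X \<in> {X. S_allocation C 2 S X \<and> envy_free S 2 v X}. ennreal (min_share 2 C v X))"
  proof (rule SUP_mono)
    fix X assume "X \<in> ?Es"
    then have al: "S_allocation s 2 S X" and ef: "envy_free S 2 v X" by auto
    then have X: "X 0 \<in> S" "X 1 \<in> S" "X 0 \<subseteq> s" "X 1 \<subseteq> s" unfolding alloc2 by auto
    have alC: "S_allocation C 2 S X" using al sC unfolding alloc2 by auto
    have key: "\<And>i. i < 2 \<Longrightarrow> m * (val (v i) (X i) / val (v i) s) \<le> val (v i) (X i) / val (v i) C
         \<and> 0 \<le> val (v i) (X i) / val (v i) s"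
    proof -
      fix i :: nat assume i: "i < 2"
      have ps: "0 < val (v i) s" and nn: "\<forall>x\<in>s. 0 \<le> v i x"
        using vs i unfolding value_density_def by blast+
      have pC: "0 < val (v i) C" using vC i unfolding value_density_def by blast
      have Xi: "X i \<subseteq> s" using X i by (auto simp: less_2_cases_iff)
      have a0: "0 \<le> val (v i) (X i)" by (rule val_nonneg[OF nn Xi])
      have eq: "val (v i) (X i) / val (v i) C = (val (v i) (X i) / val (v i) s) * (val (v i) s / val (v i) C)"
        using ps pC by (simp add: field_simps)
      have "m * (val (v i) (X i) / val (v i) s) \<le> (val (v i) s / val (v i) C) * (val (v i) (X i) / val (v i) s)"
        by (rule mult_right_mono) (use mi i a0 ps in auto)
      then show "m * (val (v i) (X i) / val (v i) s) \<le> val (v i) (X i) / val (v i) C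
         \<and> 0 \<le> val (v i) (X i) / val (v i) s" using eq a0 ps by (metis divide_nonneg_pos mult.commute)
    qed
    have "m * min_share 2 s v X \<le> min_share 2 C v X"
    proof -
      have "m * min_share 2 s v X = min (m * (val (v 0) (X 0) / val (v 0) s)) (m * (val (v 1) (X 1) / val (v 1) s))"
        unfolding min_share2 using m0 by (simp add: min_mult_distrib_left)
      then show ?thesis unfolding min_share2 using key[of 0] key[of 1] by linarith
    qed
    moreover have "0 \<le> min_share 2 s v X" unfolding min_share2 using key[of 0] key[of 1] by simp
    ultimately have "ennreal m * ennreal (min_share 2 s v X) \<le> ennreal (min_share 2 C v X)"
      using m0 by (simp add: ennreal_mult[symmetric] ennreal_leI)
    then show "\<exists>Y\<in>{X. S_allocation C 2 S X \<and> envy_free S 2 v X}.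
        ennreal m * ennreal (min_share 2 s v X) \<le> ennreal (min_share 2 C v Y)"
      using alC ef by blast
  qed
  finally show ?thesis .
qed


lemma per_alloc:
  fixes C :: "'a::euclidean_space set" and v :: "nat \<Rightarrow> 'a \<Rightarrow> real"
  assumes S: "S \<subseteq> sets borel" and vC: "\<forall>i<2. value_density C (v i)"
    and Y: "S_allocation C 2 S Y"
  shows "ennreal (min_share 2 C v Y) * (INF s \<in> S. PropEF s 2 S) \<le>
    (SUP X \<in> {X. S_allocation C 2 S X \<and> envy_free S 2 v X}. ennreal (min_share 2 C v X))"
    (is "?L \<le> ?R")
proof -
  let ?m = "min_share 2 C v Y"
  let ?P = "INF s \<in> S. PropEF s 2 S"
  have up: "\<And>X. S_allocation C 2 S X \<Longrightarrow> envy_free S 2 v X \<Longrightarrow> ennreal (min_share 2 C v X) \<le> ?R"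
    by (rule SUP_upper) auto
  show ?thesis
  proof (cases "?m \<le> 0")
    case True then show ?thesis by (simp add: ennreal_neg)
  next
    case False
    then have m0: "0 < ?m" by simp
    have v0: "value_density C (v 0)" and v1: "value_density C (v 1)" using vC by auto
    have pC0: "0 < val (v 0) C" using v0 unfolding value_density_def by blast
    have pC1: "0 < val (v 1) C" using v1 unfolding value_density_def by blast
    have Y01: "Y 0 \<in> S" "Y 1 \<in> S" "Y 0 \<subseteq> C" "Y 1 \<subseteq> C" "Y 0 \<inter> Y 1 = {}" using Y unfolding alloc2 by auto
    have Yl: "Y 0 \<in> sets lebesgue" "Y 1 \<in> sets lebesgue" using Y01 S borel_leb by auto
    have nn0: "\<forall>x\<in>C. 0 \<le> v 0 x" and nn1: "\<forall>x\<in>C. 0 \<le> v 1 x"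
      using v0 v1 unfolding value_density_def by blast+
    have a00: "?m \<le> val (v 0) (Y 0) / val (v 0) C" and a11: "?m \<le> val (v 1) (Y 1) / val (v 1) C"
      unfolding min_share2 by auto
    have p00: "0 < val (v 0) (Y 0)" using a00 m0 pC0 by (smt (verit) divide_nonpos_pos)
    have p11: "0 < val (v 1) (Y 1)" using a11 m0 pC1 by (smt (verit) divide_nonpos_pos)
    have vs: "\<And>i j. i < 2 \<Longrightarrow> j < 2 \<Longrightarrow> valS S (v i) (Y j) = val (v i) (Y j)"
      using valS_eq[OF _ _ _ S] vC Y01 by (auto simp: less_2_cases_iff)
    have vd00: "value_density (Y 0) (v 0)" by (rule vd_restrict[OF v0 Y01(3) Yl(1) p00])
    have "?P \<le> PropEF (Y 0) 2 S" by (rule INF_lower) (rule Y01(1))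
    also have "\<dots> \<le> 1" by (rule PropEF_le1[OF vd00 S Yl(1)])
    finally have P1: "?P \<le> 1" .
    have "?L \<le> ennreal ?m" using P1 by (metis mult.right_neutral mult_left_mono zero_le)
    consider (a) "val (v 0) (Y 1) \<le> val (v 0) (Y 0)" "val (v 1) (Y 0) \<le> val (v 1) (Y 1)"
      | (b) "val (v 0) (Y 0) < val (v 0) (Y 1)" "val (v 1) (Y 1) < val (v 1) (Y 0)"
      | (c) "val (v 0) (Y 0) < val (v 0) (Y 1)" "val (v 1) (Y 0) \<le> val (v 1) (Y 1)"
      | (d) "val (v 0) (Y 1) \<le> val (v 0) (Y 0)" "val (v 1) (Y 1) < val (v 1) (Y 0)"
      by linarith
    then show ?thesis
    proof cases
      case a
      have "envy_free S 2 v Y" unfolding ef2 using a vs by simp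
      then have "ennreal ?m \<le> ?R" using up Y by blast
      with \<open>?L \<le> ennreal ?m\<close> show ?thesis by order
    next
      case b
      define X where "X = (\<lambda>i::nat. if i = 0 then Y 1 else Y 0)"
      have X0: "X 0 = Y 1" and X1: "X 1 = Y 0" unfolding X_def by auto
      have aX: "S_allocation C 2 S X" unfolding alloc2 X0 X1 using Y01 by auto
      have eX: "envy_free S 2 v X" unfolding ef2 X0 X1 using b vs by simp
      have "val (v 0) (Y 0) / val (v 0) C \<le> val (v 0) (Y 1) / val (v 0) C"
        using b pC0 by (simp add: divide_right_mono)
      moreover have "val (v 1) (Y 1) / val (v 1) C \<le> val (v 1) (Y 0) / val (v 1) C"
        using b pC1 by (simp add: divide_right_mono)
      ultimately have "?m \<le> min_share 2 C v X" unfolding min_share2 X0 X1 by linarith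
      then have "ennreal ?m \<le> ?R" using up[OF aX eX] by (meson ennreal_leI order_trans)
      with \<open>?L \<le> ennreal ?m\<close> show ?thesis by order
    next
      case c
      have p01: "0 < val (v 0) (Y 1)" using c p00 by linarith
      have vs1: "\<forall>i<2. value_density (Y 1) (v i)"
        using vd_restrict[OF v0 Y01(4) Yl(2) p01] vd_restrict[OF v1 Y01(4) Yl(2) p11]
        by (auto simp: less_2_cases_iff)
      have "val (v 0) (Y 0) / val (v 0) C \<le> val (v 0) (Y 1) / val (v 0) C"
        using c pC0 by (simp add: divide_right_mono)
      then have mi: "\<forall>i<2. ?m \<le> val (v i) (Y 1) / val (v i) C" using a00 a11 by (auto simp: less_2_cases_iff)
      have "ennreal ?m * PropEF (Y 1) 2 S \<le> ?R"
        by (rule sub_case[OF S vC Y01(2) Y01(4) vs1 _ mi]) (use m0 in simp)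
      moreover have "?L \<le> ennreal ?m * PropEF (Y 1) 2 S"
        by (rule mult_left_mono[OF INF_lower[OF Y01(2)]]) simp
      ultimately show ?thesis by order
    next
      case d
      have p10: "0 < val (v 1) (Y 0)" using d p11 by linarith
      have vs0: "\<forall>i<2. value_density (Y 0) (v i)"
        using vd_restrict[OF v0 Y01(3) Yl(1) p00] vd_restrict[OF v1 Y01(3) Yl(1) p10]
        by (auto simp: less_2_cases_iff)
      have "val (v 1) (Y 1) / val (v 1) C \<le> val (v 1) (Y 0) / val (v 1) C"
        using d pC1 by (simp add: divide_right_mono)
      then have mi: "\<forall>i<2. ?m \<le> val (v i) (Y 0) / val (v i) C" using a00 a11 by (auto simp: less_2_cases_iff)
      have "ennreal ?m * PropEF (Y 0) 2 S \<le> ?R"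
        by (rule sub_case[OF S vC Y01(1) Y01(3) vs0 _ mi]) (use m0 in simp)
      moreover have "?L \<le> ennreal ?m * PropEF (Y 0) 2 S"
        by (rule mult_left_mono[OF INF_lower[OF Y01(1)]]) simp
      ultimately show ?thesis by order
    qed
  qed
qed

theorem mainTheorem9:
  fixes C :: "'a::euclidean_space set" and S :: "'a set set"
  assumes "C \<in> sets borel" and "S \<subseteq> sets borel"
  shows "PropEF C 2 S \<ge> Prop C 2 S * (INF s \<in> S. PropEF s 2 S)"
  unfolding PropEF_def[of C 2 S]
proof (rule INF_greatest)
  fix v :: "nat \<Rightarrow> 'a \<Rightarrow> real" assume "v \<in> {v. \<forall>i<2. value_density C (v i)}"
  then have vC: "\<forall>i<2. value_density C (v i)" by simp
  let ?P = "INF s \<in> S. PropEF s 2 S"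
  have "Prop C 2 S \<le> (SUP X \<in> {X. S_allocation C 2 S X}. ennreal (min_share 2 C v X))"
    unfolding Prop_def by (rule INF_lower) (use vC in simp)
  then have "Prop C 2 S * ?P \<le> (SUP X \<in> {X. S_allocation C 2 S X}. ennreal (min_share 2 C v X)) * ?P"
    by (rule mult_right_mono) simp
  also have "\<dots> = (SUP X \<in> {X. S_allocation C 2 S X}. ennreal (min_share 2 C v X) * ?P)"
    by (rule SUP_mult_right_ennreal)
  also have "\<dots> \<le> (SUP X \<in> {X. S_allocation C 2 S X \<and> envy_free S 2 v X}. ennreal (min_share 2 C v X))"
    by (rule SUP_least) (use per_alloc[OF assms(2) vC] in simp)
  finally show "Prop C 2 S * ?P \<le> (SUP X \<in> {X. S_allocation C 2 S X \<and> envy_free S 2 v X}. ennreal (min_share 2 C v X))" .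
qed

end
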